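(* Let $r,s>0$ and let $F:U\subseteq\mathcal G(r,s)\to\mathcal G(r',s')$ be a holomorphic map, where $U$ is an open set containing a null point. If $F$ maps null points to null points, then there exists an open set $U'\subseteq U$ such that $F|_{U'}:U'\to\mathcal G(r',s')$ is an orthogonal map.
   Context: For $r\le s$, $\mathbb C^{r,s}$ denotes $\mathbb C^{r+s}$ with the indefinite Hermitian form $\langle z,w\rangle_{r,s}=\sum_{i=1}^r z_i\bar w_i-\sum_{i=r+1}^{r+s}z_i\bar w_i$. $\mathcal G(r,s)$ denotes the Grassmannian $G(r,r+s)$; for $p\in\mathcal G(r,s)$, $V_p$ is the corresponding $r$-dimensional subspace and $A_p$ an $r\times(r+s)$ matrix whose rows span $V_p$. With $I_{r,s}=\mathrm{diag}(I_r,-I_s)$, $p\perp q$ means $A_pI_{r,s}A_q^H=0$, and $p$ is null if $A_pI_{r,s}A_p^H=0$. A holomorphic map $F:U'\to\mathcal G(r',s')$, with $U'\subseteq\mathcal G(r,s)$ a connected open set containing a null point, is (local) orthogonal if $F(p)\perp F(q)$ for all $p,q\in U'$ with $p\perp q$. *)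

theory Defs
  imports "HOL-Analysis.Analysis"
begin

text \<open>Matrices with complex entries: an r x (r+s) matrix is an element of
  complex^('r+'s)^'r, with CARD('r) = r and CARD('s) = s; the columns indexed by
  Inl are the positive ones, those indexed by Inr the negative ones of the form
  of signature (r,s).\<close>

definition cmat_scale :: "complex \<Rightarrow> complex^'n^'m \<Rightarrow> complex^'n^'m" where
  "cmat_scale c v = (\<chi> i j. c * v$i$j)"

definition mat_holomorphic_on ::
  "(complex^'n^'m \<Rightarrow> complex^'b^'a) \<Rightarrow> (complex^'n^'m) set \<Rightarrow> bool" where
  "mat_holomorphic_on f W \<longleftrightarrow> open W \<and>
     (\<forall>x\<in>W. \<exists>L. (f has_derivative L) (at x) \<and>
        (\<forall>v. L (cmat_scale \<i> v) = cmat_scale \<i> (L v)))"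

definition full_rank :: "complex^'c^'r \<Rightarrow> bool" where
  "full_rank A \<longleftrightarrow> (\<forall>c. transpose A *v c = 0 \<longrightarrow> c = 0)"

definition rowsp :: "complex^'c^'r \<Rightarrow> (complex^'c) set" where
  "rowsp A = range (\<lambda>c. transpose A *v c)"

definition Grass :: "(complex^('r::finite + 's::finite)) set set" where
  "Grass = {rowsp (A :: complex^('r+'s)^'r) | A. full_rank A}"

definition reps :: "(complex^('r::finite + 's::finite)) set set \<Rightarrow> (complex^('r+'s)^'r) set" where
  "reps U = {A. full_rank A \<and> rowsp A \<in> U}"

definition grass_top :: "(complex^('r::finite + 's::finite)) set topology" where
  "grass_top = topology (\<lambda>U. U \<subseteq> (Grass :: (complex^('r+'s)) set set) \<and>
                               open (reps U :: (complex^('r+'s)^'r) set))"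

definition Isig :: "complex^('r::finite + 's::finite)^('r+'s)" where
  "Isig = (\<chi> i j. if i = j then (case i of Inl _ \<Rightarrow> 1 | Inr _ \<Rightarrow> -1) else 0)"

definition ctrans :: "complex^'n^'m \<Rightarrow> complex^'m^'n" where
  "ctrans B = (\<chi> i j. cnj (B$j$i))"

definition gperp :: "(complex^('r::finite + 's::finite)) set \<Rightarrow> (complex^('r+'s)) set \<Rightarrow> bool" where
  "gperp p q \<longleftrightarrow> (\<exists>(A :: complex^('r+'s)^'r) (B :: complex^('r+'s)^'r).
      full_rank A \<and> rowsp A = p \<and> full_rank B \<and> rowsp B = q \<and>
      A ** Isig ** ctrans B = 0)"

definition gnull :: "(complex^('r::finite + 's::finite)) set \<Rightarrow> bool" where
  "gnull p \<longleftrightarrow> gperp p p"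

definition grass_holomorphic ::
  "((complex^('r::finite + 's::finite)) set \<Rightarrow> (complex^('r2::finite + 's2::finite)) set)
    \<Rightarrow> (complex^('r+'s)) set set \<Rightarrow> bool" where
  "grass_holomorphic F U \<longleftrightarrow>
     openin grass_top U \<and>
     (\<forall>p\<in>U. F p \<in> (Grass :: (complex^('r2+'s2)) set set)) \<and>
     (\<forall>A \<in> (reps U :: (complex^('r+'s)^'r) set).
        \<exists>W (\<Phi> :: complex^('r+'s)^'r \<Rightarrow> complex^('r2+'s2)^'r2).
          A \<in> W \<and> W \<subseteq> reps U \<and> mat_holomorphic_on \<Phi> W \<and>
          (\<forall>B\<in>W. full_rank (\<Phi> B) \<and> rowsp (\<Phi> B) = F (rowsp B)))"

definition orthogonal_map ::
  "((complex^('r::finite + 's::finite)) set \<Rightarrow> (complex^('r2::finite + 's2::finite)) set)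
    \<Rightarrow> (complex^('r+'s)) set set \<Rightarrow> bool" where
  "orthogonal_map F U' \<longleftrightarrow>
     grass_holomorphic F U' \<and> connectedin grass_top U' \<and> (\<exists>p\<in>U'. gnull p) \<and>
     (\<forall>p\<in>U'. \<forall>q\<in>U'. gperp p q \<longrightarrow> gperp (F p) (F q))"

end

theory Submission
  imports Defs "HOL-Complex_Analysis.Complex_Analysis"
begin


lemma cmat_scale_nth[simp]: "cmat_scale c A $ i $ j = c * A $ i $ j"
  by (simp add: cmat_scale_def)
lemma ctrans_nth[simp]: "ctrans A $ i $ j = cnj (A $ j $ i)"
  by (simp add: ctrans_def)

lemma ctrans_ctrans[simp]: "ctrans (ctrans A) = A"
  by (simp add: vec_eq_iff)
lemma ctrans_add[simp]: "ctrans (A + B) = ctrans A + ctrans B"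
  by (simp add: vec_eq_iff)
lemma ctrans_diff[simp]: "ctrans (A - B) = ctrans A - ctrans B"
  by (simp add: vec_eq_iff)
lemma ctrans_zero[simp]: "ctrans 0 = 0"
  by (simp add: vec_eq_iff)
lemma ctrans_scale[simp]: "ctrans (cmat_scale c A) = cmat_scale (cnj c) (ctrans A)"
  by (simp add: vec_eq_iff)
lemma ctrans_mat1[simp]: "ctrans (mat 1 :: complex^'n^'n) = mat 1"
  by (simp add: vec_eq_iff mat_def)
lemma ctrans_mult: "ctrans (A ** B) = ctrans B ** ctrans (A :: complex^'n^'m)"
  by (simp add: vec_eq_iff matrix_matrix_mult_def mult.commute)

lemma scale_mult_left[simp]: "cmat_scale c A ** B = cmat_scale c (A ** B)"
  by (simp add: vec_eq_iff matrix_matrix_mult_def sum_distrib_left mult.assoc)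
lemma scale_mult_right[simp]: "A ** cmat_scale c B = cmat_scale c (A ** B)"
  by (simp add: vec_eq_iff matrix_matrix_mult_def sum_distrib_left mult.left_commute)
lemma scale_add[simp]: "cmat_scale c (A + B) = cmat_scale c A + cmat_scale c B"
  by (simp add: vec_eq_iff algebra_simps)
lemma scale_diff[simp]: "cmat_scale c (A - B) = cmat_scale c A - cmat_scale c B"
  by (simp add: vec_eq_iff algebra_simps)
lemma scale_zero[simp]: "cmat_scale c 0 = 0"
  by (simp add: vec_eq_iff)
lemma scale_scale[simp]: "cmat_scale c (cmat_scale d A) = cmat_scale (c*d) A"
  by (simp add: vec_eq_iff)

lemma Isig_nth: "(Isig :: complex^('r::finite+'s::finite)^('r+'s)) $ i $ j = (if i = j then (case i of Inl _ \<Rightarrow> 1 | Inr _ \<Rightarrow> -1) else 0)"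
  by (simp add: Isig_def)
lemma ctrans_Isig[simp]: "ctrans (Isig :: complex^('r::finite+'s::finite)^('r+'s)) = Isig"
  by (auto simp add: vec_eq_iff Isig_nth split: sum.splits)
lemma Isig_Isig[simp]: "(Isig :: complex^('r::finite+'s::finite)^('r+'s)) ** Isig = mat 1"
proof -
  have "\<And>i j. (\<Sum>k\<in>UNIV. (Isig :: complex^('r+'s)^('r+'s)) $ i $ k * Isig $ k $ j) = (if i = j then 1 else 0)"
  proof -
    fix i j :: "'r+'s"
    have "(\<Sum>k\<in>UNIV. (Isig :: complex^('r+'s)^('r+'s)) $ i $ k * Isig $ k $ j) = Isig $ i $ i * Isig $ i $ j"
      by (subst sum.remove[of _ i]) (auto simp: Isig_nth intro!: sum.neutral)
    then show "?thesis i j" by (auto simp: Isig_nth split: sum.splits)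
  qed
  then show ?thesis by (simp add: vec_eq_iff matrix_matrix_mult_def mat_def)
qed

lemma ctrans_uminus[simp]: "ctrans (- A) = - ctrans A"
  by (simp add: vec_eq_iff)
lemma scale_uminus[simp]: "cmat_scale c (- A) = - cmat_scale c A"
  by (simp add: vec_eq_iff)
lemma mm_uminus_l[simp]: "(- A) ** B = - (A ** (B::complex^'p^'n))"
  by (simp add: vec_eq_iff matrix_matrix_mult_def sum_negf)
lemma mm_uminus_r[simp]: "A ** (- B) = - (A ** (B::complex^'p^'n))"
  by (simp add: vec_eq_iff matrix_matrix_mult_def sum_negf)
lemma numeral_mat_scale[simp]: "(numeral n :: complex^'n^'m) * A = cmat_scale (numeral n) A"
  by (simp add: vec_eq_iff)
lemma neg_numeral_mat_scale[simp]: "(- numeral n :: complex^'n^'m) * A = cmat_scale (- numeral n) A"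
  by (simp add: vec_eq_iff)

definition pr :: "complex^('r::finite+'s::finite)^'a \<Rightarrow> complex^('r+'s)^'b \<Rightarrow> complex^'b^'a" where
  "pr A B = A ** Isig ** ctrans B"

lemma mm_add_r: "(A + B) ** C = A ** C + B ** (C::complex^'p^'n)"
  by (simp add: vec_eq_iff matrix_matrix_mult_def sum.distrib distrib_right)
lemma mm_add_l: "C ** (A + B) = C ** A + C ** (B::complex^'p^'n)"
  by (simp add: vec_eq_iff matrix_matrix_mult_def sum.distrib distrib_left)
lemma mm_diff_r: "(A - B) ** C = A ** C - B ** (C::complex^'p^'n)"
  by (simp add: vec_eq_iff matrix_matrix_mult_def sum_subtractf left_diff_distrib)
lemma mm_diff_l: "C ** (A - B) = C ** A - C ** (B::complex^'p^'n)"
  by (simp add: vec_eq_iff matrix_matrix_mult_def sum_subtractf right_diff_distrib)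

lemma pr_add_left[simp]: "pr (A + A') B = pr A B + pr A' B"
  by (simp add: pr_def mm_add_r)
lemma pr_add_right[simp]: "pr A (B + B') = pr A B + pr A B'"
  by (simp add: pr_def mm_add_l)
lemma pr_diff_left[simp]: "pr (A - A') B = pr A B - pr A' B"
  by (simp add: pr_def mm_diff_r)
lemma pr_diff_right[simp]: "pr A (B - B') = pr A B - pr A B'"
  by (simp add: pr_def mm_diff_l)
lemma pr_scale_left[simp]: "pr (cmat_scale c A) B = cmat_scale c (pr A B)"
  by (simp add: pr_def)
lemma pr_scale_right[simp]: "pr A (cmat_scale c B) = cmat_scale (cnj c) (pr A B)"
  by (simp add: pr_def)
lemma pr_mult_left[simp]: "pr (M ** A) B = M ** pr A B"
  by (simp add: pr_def matrix_mul_assoc)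
lemma pr_mult_right[simp]: "pr A (M ** B) = pr A B ** ctrans M"
  by (simp add: pr_def matrix_mul_assoc ctrans_mult)
lemma pr_swap: "ctrans (pr A B) = pr B A"
  by (simp add: pr_def ctrans_mult matrix_mul_assoc)
lemma pr_uminus_left[simp]: "pr (- A) B = - pr A B" by (simp add: pr_def)
lemma pr_uminus_right[simp]: "pr A (- B) = - pr A B" by (simp add: pr_def)
lemma pr_zero_left[simp]: "pr 0 B = 0" by (simp add: pr_def)
lemma pr_zero_right[simp]: "pr A 0 = 0" by (simp add: pr_def)



lemma row_in_rowsp: "A $ i \<in> rowsp A"
proof -
  have "transpose A *v axis i 1 = A $ i"
    by (simp add: vec_eq_iff matrix_vector_mult_def transpose_def axis_def if_distrib cong: if_cong)
  then show ?thesis unfolding rowsp_def by (metis rangeI)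
qed

lemma rowsp_sub_ex:
  assumes "rowsp (A::complex^'c^'r) \<subseteq> rowsp (A'::complex^'c^'q)"
  shows "\<exists>G. A = G ** A'"
proof -
  have "\<forall>i. \<exists>c. A $ i = transpose A' *v c"
    using assms row_in_rowsp unfolding rowsp_def by blast
  then obtain c where c: "\<And>i. A $ i = transpose A' *v c i" by metis
  have "A = (\<chi> i. c i) ** A'"
    by (simp add: vec_eq_iff c matrix_vector_mult_def matrix_matrix_mult_def transpose_def mult.commute)
  then show ?thesis by blast
qed

lemma rowsp_mult_sub: "rowsp (G ** A) \<subseteq> rowsp A"
  unfolding rowsp_def
  by (auto simp: matrix_transpose_mul matrix_vector_mul_assoc[symmetric])

lemma rowsp_eq_ex:
  assumes "rowsp (A::complex^'c^'r) = rowsp (A'::complex^'c^'q)"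
  shows "\<exists>G. A = G ** A'"
  using assms rowsp_sub_ex by blast

lemma full_rank_cancel:
  assumes "full_rank (A::complex^'c^'r)" "M ** A = 0"
  shows "M = 0"
proof -
  have "\<And>k. transpose A *v (M $ k) = 0"
  proof -
    fix k
    have "transpose A *v (M $ k) = (M ** A) $ k"
      by (simp add: vec_eq_iff matrix_vector_mult_def matrix_matrix_mult_def transpose_def mult.commute)
    then show "transpose A *v (M $ k) = 0" using assms(2) by simp
  qed
  then show ?thesis using assms(1) unfolding full_rank_def by (simp add: vec_eq_iff)
qed

lemma full_rank_of_right_inv:
  assumes "(N::complex^'c^'r) ** R = mat 1"
  shows "full_rank N"
  unfolding full_rank_def
proof (intro allI impI)
  fix c assume "transpose N *v c = 0"
  then have "transpose R *v (transpose N *v c) = 0" by simp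
  moreover have "transpose (N ** R) *v c = transpose R *v (transpose N *v c)"
    by (simp only: matrix_vector_mul_assoc matrix_transpose_mul)
  ultimately show "c = 0" using assms by (simp add: transpose_mat)
qed

lemma full_rank_right_inv:
  assumes "full_rank (A::complex^'c^'r)"
  shows "\<exists>R. A ** R = mat 1"
proof -
  have "\<exists>B. B ** transpose A = mat 1"
    using assms unfolding full_rank_def matrix_left_invertible_ker by blast
  then show ?thesis using left_invertible_transpose by (metis transpose_transpose)
qed

lemma gperp_reps:
  fixes A B :: "complex^('r::finite+'s::finite)^'r"
  assumes "gperp (rowsp A) (rowsp B)"
  shows "pr A B = 0"
proof -
  obtain A' B' :: "complex^('r+'s)^'r" where h: "full_rank A'" "rowsp A' = rowsp A" "full_rank B'" "rowsp B' = rowsp B"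
     "A' ** Isig ** ctrans B' = 0"
    using assms unfolding gperp_def by blast
  obtain G H where "A = G ** A'" "B = H ** B'" using rowsp_eq_ex h by metis
  then show ?thesis using h(5) by (simp add: pr_def[symmetric])
qed

lemma gnull_reps: fixes A :: "complex^('r::finite+'s::finite)^'r" shows "gnull (rowsp A) \<Longrightarrow> pr A A = 0"
  unfolding gnull_def by (rule gperp_reps)

lemma gperp_intro: fixes A B :: "complex^('r::finite+'s::finite)^'r" shows "full_rank A \<Longrightarrow> full_rank B \<Longrightarrow> pr A B = 0 \<Longrightarrow> gperp (rowsp A) (rowsp B)"
  unfolding gperp_def pr_def by blast

lemma gnull_intro: fixes A :: "complex^('r::finite+'s::finite)^'r" shows "full_rank A \<Longrightarrow> pr A A = 0 \<Longrightarrow> gnull (rowsp A)"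
  unfolding gnull_def by (rule gperp_intro)

lemma pr_same_point:
  fixes A B :: "complex^('r::finite+'s::finite)^'r"
  assumes "rowsp A = rowsp B" "gnull (rowsp A)"
  shows "pr A B = 0"
  using assms gperp_reps unfolding gnull_def by metis

definition csol :: "complex^'n^'n \<Rightarrow> complex^'n \<Rightarrow> complex^'n" where
  "csol X b = (\<chi> k. det(\<chi> i j. if j = k then b$i else X$i$j) / det X)"
definition cinv :: "complex^'n^'n \<Rightarrow> complex^'n^'n" where
  "cinv X = (\<chi> k j. csol X (axis j 1) $ k)"

lemma cinv_right: assumes "det X \<noteq> 0" shows "X ** cinv X = mat 1"
proof -
  have s: "\<And>b. X *v csol X b = b" using cramer[OF assms] unfolding csol_def by blast
  show ?thesis
  proof (simp add: vec_eq_iff, intro allI)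
    fix i j
    have "(X ** cinv X) $ i $ j = (X *v csol X (axis j 1)) $ i"
      by (simp add: matrix_matrix_mult_def matrix_vector_mult_def cinv_def)
    also have "\<dots> = mat 1 $ i $ j" by (simp add: s axis_def mat_def)
    finally show "(X ** cinv X) $ i $ j = mat 1 $ i $ j" .
  qed
qed

lemma cinv_left: assumes "det X \<noteq> 0" shows "cinv X ** X = mat 1"
  using cinv_right[OF assms] matrix_left_right_inverse by blast

lemma det_mat1_c: "det (mat 1 :: complex^'n^'n) = 1" by simp

lemma cinv_mat1: "cinv (mat 1 :: complex^'n^'n) = mat 1"
  using cinv_right[of "mat 1 :: complex^'n^'n"] by simp

lemma continuous_on_det[continuous_intros]:
  fixes f :: "'a::topological_space \<Rightarrow> complex^'n^'n"
  assumes "continuous_on S f"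
  shows "continuous_on S (\<lambda>x. det (f x))"
  unfolding det_def
  by (intro continuous_intros assms)

lemma continuous_on_mm[continuous_intros]:
  fixes f :: "'a::topological_space \<Rightarrow> complex^'n^'m" and g :: "'a \<Rightarrow> complex^'p^'n"
  assumes "continuous_on S f" "continuous_on S g"
  shows "continuous_on S (\<lambda>x. f x ** g x)"
  unfolding matrix_matrix_mult_def
  by (intro continuous_intros assms)

lemma continuous_on_if_const: "continuous_on S g \<Longrightarrow> continuous_on S (\<lambda>x. if P then a else g x)"
  by (cases P) auto

lemma continuous_on_cinv[continuous_intros]:
  fixes f :: "'a::topological_space \<Rightarrow> complex^'n^'n"
  assumes "continuous_on S f" "\<And>x. x \<in> S \<Longrightarrow> det (f x) \<noteq> 0"
  shows "continuous_on S (\<lambda>x. cinv (f x))"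
  unfolding cinv_def csol_def
  by (intro continuous_intros continuous_on_if_const assms) (use assms(2) in auto)

lemma continuous_on_ctrans[continuous_intros]:
  fixes f :: "'a::topological_space \<Rightarrow> complex^'n^'m"
  assumes "continuous_on S f"
  shows "continuous_on S (\<lambda>x. ctrans (f x))"
  unfolding ctrans_def
  by (intro continuous_intros assms)

lemma continuous_on_cmat_scale[continuous_intros]:
  fixes f :: "'a::topological_space \<Rightarrow> complex^'n^'m"
  assumes "continuous_on S f" "continuous_on S c"
  shows "continuous_on S (\<lambda>x. cmat_scale (c x) (f x))"
  unfolding cmat_scale_def
  by (intro continuous_intros assms)



definition ncurve :: "complex^('r::finite+'s::finite)^'a \<Rightarrow> complex^('r+'s)^'a \<Rightarrow> complex^('r+'s)^'a \<Rightarrow> complex \<Rightarrow> complex^('r+'s)^'a" where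
  "ncurve A B B0 \<tau> = (let D = cmat_scale (-\<i>/2) (A - B) in
      cmat_scale (1/2) (A + B) + cmat_scale \<tau> D + cmat_scale (-(1+\<tau>^2)/2) (pr D D ** B0))"

lemma scale_1[simp]: "cmat_scale 1 A = A" by (simp add: vec_eq_iff)
lemma scale_0[simp]: "cmat_scale 0 A = 0" by (simp add: vec_eq_iff)

lemma ncurve_i: "ncurve A B B0 \<i> = A"
  by (simp add: ncurve_def Let_def vec_eq_iff field_simps)

lemma ncurve_mi: "ncurve A B B0 (-\<i>) = B"
  by (simp add: ncurve_def Let_def vec_eq_iff field_simps)

lemma ncurve_same: "ncurve A A B0 \<tau> = A"
  by (simp add: ncurve_def Let_def vec_eq_iff field_simps)

lemma ncurve_B0:
  assumes "pr A B0 = mat 1" "pr B B0 = mat 1" "pr B0 B0 = 0"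
  shows "pr (ncurve A B B0 \<tau>) B0 = mat 1"
  by (simp add: ncurve_def Let_def assms mm_add_l mm_add_r mm_diff_l mm_diff_r)

lemma ncurve_null:
  assumes "pr A B0 = mat 1" "pr B B0 = mat 1" "pr B0 B0 = 0" "pr A B = 0"
  shows "pr (ncurve A B B0 (of_real t)) (ncurve A B B0 (of_real t)) = 0"
proof -
  have s1: "pr B0 A = mat 1" using pr_swap[of A B0] assms by simp
  have s2: "pr B0 B = mat 1" using pr_swap[of B B0] assms by simp
  have s3: "pr B A = 0" using pr_swap[of A B] assms by simp
  have h1: "ctrans (pr A A) = pr A A" "ctrans (pr B B) = pr B B" by (simp_all add: pr_swap)
  show ?thesis
    apply (simp add: ncurve_def Let_def assms s1 s2 s3 h1 mm_add_l mm_add_r mm_diff_l mm_diff_r)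
    apply (simp add: vec_eq_iff field_simps mat_def power2_eq_square)
    done
qed




lemma reps_Int: "reps (S \<inter> T) = reps S \<inter> reps T" by (auto simp: reps_def)
lemma reps_Union: "reps (\<Union>K) = \<Union>(reps ` K)" by (auto simp: reps_def)

lemma grass_istop: "istopology (\<lambda>U. U \<subseteq> (Grass :: (complex^('r::finite+'s::finite)) set set) \<and>
                               open (reps U :: (complex^('r+'s)^'r) set))"
  unfolding istopology_def
proof (rule conjI; intro allI impI)
  fix S T :: "(complex^('r+'s)) set set"
  assume "S \<subseteq> Grass \<and> open (reps S :: (complex^('r+'s)^'r) set)" "T \<subseteq> Grass \<and> open (reps T :: (complex^('r+'s)^'r) set)"
  then show "S \<inter> T \<subseteq> Grass \<and> open (reps (S \<inter> T) :: (complex^('r+'s)^'r) set)"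
    unfolding reps_Int by blast
next
  fix K :: "(complex^('r+'s)) set set set"
  assume "\<forall>S\<in>K. S \<subseteq> Grass \<and> open (reps S :: (complex^('r+'s)^'r) set)"
  then show "\<Union>K \<subseteq> Grass \<and> open (reps (\<Union>K) :: (complex^('r+'s)^'r) set)"
    unfolding reps_Union by blast
qed

lemma openin_grass: "openin (grass_top :: (complex^('r::finite+'s::finite)) set topology) U \<longleftrightarrow>
   U \<subseteq> Grass \<and> open (reps U :: (complex^('r+'s)^'r) set)"
  unfolding grass_top_def by (simp only: topology_inverse'[OF grass_istop])


lemma full_rank_mult:
  assumes "full_rank (A::complex^'c^'r)" "G ** H = mat 1"
  shows "full_rank (G ** A)"
  unfolding full_rank_def
proof (intro allI impI)
  fix c assume c: "transpose (G ** A) *v c = 0"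
  have "transpose (G ** A) *v c = transpose A *v (transpose G *v c)"
    by (simp only: matrix_vector_mul_assoc matrix_transpose_mul)
  then have "transpose A *v (transpose G *v c) = 0" using c by simp
  then have "transpose G *v c = 0" using assms(1) unfolding full_rank_def by blast
  then have "transpose H *v (transpose G *v c) = 0" by simp
  moreover have "transpose H *v (transpose G *v c) = transpose (G ** H) *v c"
    by (simp only: matrix_vector_mul_assoc matrix_transpose_mul)
  ultimately show "c = 0" using assms(2) by (simp add: transpose_mat)
qed



lemma rowsp_image_open:
  fixes Ball :: "(complex^('r::finite+'s::finite)^'r) set"
  assumes "open Ball" "\<And>A. A \<in> Ball \<Longrightarrow> full_rank A"
  shows "openin grass_top (rowsp ` Ball)"
  unfolding openin_grass
proof
  show "rowsp ` Ball \<subseteq> Grass" using assms(2) by (auto simp: Grass_def)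
  show "open (reps (rowsp ` Ball) :: (complex^('r+'s)^'r) set)"
    unfolding open_subopen[of "reps (rowsp ` Ball)"]
  proof
    fix C :: "complex^('r+'s)^'r"
    assume "C \<in> reps (rowsp ` Ball)"
    then obtain A where C: "full_rank C" "A \<in> Ball" "rowsp C = rowsp A" by (auto simp: reps_def)
    obtain G :: "complex^'r^'r" where G: "C = G ** A" using rowsp_eq_ex C(3) by blast
    obtain H :: "complex^'r^'r" where H: "A = H ** C" using rowsp_eq_ex C(3) by metis
    have "G ** H ** C = C" using G H by (metis matrix_mul_assoc)
    then have "(G ** H - mat 1) ** C = 0"
      by (simp add: mm_diff_r)
    then have "G ** H - mat 1 = 0" using full_rank_cancel[OF C(1)] by blast
    then have GH: "G ** H = mat 1" by simp
    define T where "T = (\<lambda>C'. H ** C') -` Ball"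
    have "open T"
    proof -
      have "continuous_on UNIV (\<lambda>C'::complex^('r+'s)^'r. H ** C')"
        by (intro continuous_intros)
      then show ?thesis unfolding T_def using assms(1)
        by (metis continuous_on_open_vimage inf_top.right_neutral open_UNIV)
    qed
    moreover have "C \<in> T" using H C(2) by (simp add: T_def)
    moreover have "T \<subseteq> reps (rowsp ` Ball)"
    proof
      fix C' assume "C' \<in> T"
      then have A': "H ** C' \<in> Ball" by (simp add: T_def)
      have eq: "C' = G ** (H ** C')" by (simp add: matrix_mul_assoc GH)
      have "full_rank C'" using full_rank_mult[OF assms(2)[OF A'] GH] eq by metis
      moreover have "rowsp C' = rowsp (H ** C')"
      proof
        show "rowsp (H ** C') \<subseteq> rowsp C'" by (rule rowsp_mult_sub)
        have "rowsp (G ** (H ** C')) \<subseteq> rowsp (H ** C')" by (rule rowsp_mult_sub)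
        then show "rowsp C' \<subseteq> rowsp (H ** C')" using eq by metis
      qed
      ultimately show "C' \<in> reps (rowsp ` Ball)" using A' by (auto simp: reps_def)
    qed
    ultimately show "\<exists>T. open T \<and> C \<in> T \<and> T \<subseteq> reps (rowsp ` Ball)" by blast
  qed
qed



lemma rowsp_image_connected:
  fixes Ball :: "(complex^('r::finite+'s::finite)^'r) set"
  assumes "open Ball" "\<And>A. A \<in> Ball \<Longrightarrow> full_rank A" "connected Ball"
  shows "connectedin grass_top (rowsp ` Ball)"
proof -
  have op: "openin grass_top (rowsp ` Ball)" using rowsp_image_open assms by blast
  have "continuous_map (top_of_set Ball) (grass_top :: (complex^('r+'s)) set topology) rowsp"
    unfolding continuous_map_def
  proof safe
    fix A assume "A \<in> topspace (top_of_set Ball)"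
    then show "rowsp A \<in> topspace grass_top" using openin_subset[OF op] by auto
  next
    fix V assume V: "openin (grass_top :: (complex^('r+'s)) set topology) V"
    have "{x \<in> topspace (top_of_set Ball). rowsp x \<in> V} = Ball \<inter> reps V"
      using assms(2) by (auto simp: reps_def)
    moreover have "open (reps V :: (complex^('r+'s)^'r) set)" using V openin_grass by blast
    ultimately show "openin (top_of_set Ball) {x \<in> topspace (top_of_set Ball). rowsp x \<in> V}"
      by (simp add: openin_open_Int)
  qed
  moreover have "connectedin (top_of_set Ball) Ball"
    using assms(3) by (simp add: connectedin_subtopology connectedin_iff_connected)
  ultimately show ?thesis using connectedin_continuous_map_image by blast
qed




lemma grass_holomorphic_mono:
  fixes F :: "(complex^('r::finite + 's::finite)) set \<Rightarrow> (complex^('r2::finite + 's2::finite)) set"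
  assumes "grass_holomorphic F U" "U' \<subseteq> U" "openin grass_top U'"
  shows "grass_holomorphic F U'"
proof -
  have a1: "\<forall>p\<in>U'. F p \<in> Grass" using assms(1,2) unfolding grass_holomorphic_def by (meson subsetD)
  have o: "open (reps U')" using assms(3) openin_grass by blast
  have a2: "\<exists>W (\<Phi> :: complex^('r+'s)^'r \<Rightarrow> complex^('r2+'s2)^'r2). A \<in> W \<and> W \<subseteq> reps U' \<and> mat_holomorphic_on \<Phi> W \<and>
          (\<forall>B\<in>W. full_rank (\<Phi> B) \<and> rowsp (\<Phi> B) = F (rowsp B))" if A: "A \<in> reps U'" for A
  proof -
    have "A \<in> reps U" using A assms(2) unfolding reps_def by blast
    then obtain W and \<Phi> :: "complex^('r+'s)^'r \<Rightarrow> complex^('r2+'s2)^'r2" where W: "A \<in> W" "W \<subseteq> reps U" "mat_holomorphic_on \<Phi> W"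
        "\<forall>B\<in>W. full_rank (\<Phi> B) \<and> rowsp (\<Phi> B) = F (rowsp B)"
      using assms(1) unfolding grass_holomorphic_def by meson
    have "mat_holomorphic_on \<Phi> (W \<inter> reps U')"
      using W(3) o unfolding mat_holomorphic_on_def by (meson IntD1 open_Int)
    moreover have "A \<in> W \<inter> reps U'" "W \<inter> reps U' \<subseteq> reps U'" using W(1) A by auto
    moreover have "\<forall>B\<in>W \<inter> reps U'. full_rank (\<Phi> B) \<and> rowsp (\<Phi> B) = F (rowsp B)" using W(4) by blast
    ultimately show ?thesis by blast
  qed
  show ?thesis unfolding grass_holomorphic_def using assms(3) a1 a2 by blast
qed





lemma scaleR2_nth[simp]: "(r *\<^sub>R (A::complex^'n^'m)) $ i $ j = of_real r * A $ i $ j"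
  unfolding vector_scaleR_component by (simp add: scaleR_conv_of_real)

lemma cmul_decomp: "z * w = complex_of_real (Re z) * w + complex_of_real (Im z) * (\<i> * w)"
  by (simp add: complex_eq_iff)

lemma scale_decomp: "cmat_scale z v = Re z *\<^sub>R v + Im z *\<^sub>R cmat_scale \<i> v"
  unfolding vec_eq_iff by (simp add: cmul_decomp[of z] scaleR_conv_of_real[where 'a=complex])

lemma clinear_ext:
  assumes "bounded_linear L" "\<And>v. L (cmat_scale \<i> v) = cmat_scale \<i> (L v)"
  shows "L (cmat_scale z v) = cmat_scale z (L v)"
proof -
  interpret bounded_linear L by fact
  have "L (cmat_scale z v) = Re z *\<^sub>R L v + Im z *\<^sub>R cmat_scale \<i> (L v)"
    unfolding scale_decomp[of z v] by (simp only: add scale assms(2))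
  also have "\<dots> = cmat_scale z (L v)" by (rule scale_decomp[symmetric])
  finally show ?thesis .
qed

lemma bounded_linear_scale_const: "bounded_linear (\<lambda>z::complex. cmat_scale z (M::complex^'n^'m))"
proof -
  have "linear (\<lambda>z::complex. cmat_scale z M)"
    by (rule linearI) (simp_all add: vec_eq_iff algebra_simps)
  then show ?thesis using linear_conv_bounded_linear by blast
qed


lemma ncurve_deriv:
  "\<exists>Q. (ncurve A B B0 has_derivative (\<lambda>h. cmat_scale h Q)) (at \<tau>)"
proof -
  define D where "D = cmat_scale (-\<i>/2) (A - B)"
  define K where "K = pr D D ** B0"
  have eq: "ncurve A B B0 = (\<lambda>\<tau>. cmat_scale (1/2) (A + B) + cmat_scale \<tau> D + cmat_scale (-(1+\<tau>^2)/2) K)"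
    by (simp add: fun_eq_iff ncurve_def Let_def D_def K_def)
  have c: "((\<lambda>\<tau>::complex. -(1+\<tau>^2)/2) has_derivative (\<lambda>h. h * (-\<tau>))) (at \<tau>)"
  proof -
    have "((\<lambda>\<tau>::complex. -(1+\<tau>^2)/2) has_field_derivative (-\<tau>)) (at \<tau>)"
      by (auto intro!: derivative_eq_intros)
    then show ?thesis unfolding has_field_derivative_def
      by (rule has_derivative_eq_rhs) (simp add: fun_eq_iff)
  qed
  have d1: "((\<lambda>\<tau>. cmat_scale \<tau> D) has_derivative (\<lambda>h. cmat_scale h D)) (at \<tau>)"
    using bounded_linear_scale_const bounded_linear_imp_has_derivative by blast
  have d2: "((\<lambda>\<tau>. cmat_scale (-(1+\<tau>^2)/2) K) has_derivative (\<lambda>h. cmat_scale (h * (-\<tau>)) K)) (at \<tau>)"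
    using bounded_linear.has_derivative[OF bounded_linear_scale_const c] .
  have "(ncurve A B B0 has_derivative (\<lambda>h. 0 + cmat_scale h D + cmat_scale (h * (-\<tau>)) K)) (at \<tau>)"
    unfolding eq by (intro has_derivative_add has_derivative_const d1 d2)
  moreover have "(\<lambda>h. 0 + cmat_scale h D + cmat_scale (h * (-\<tau>)) K) = (\<lambda>h. cmat_scale h (D + cmat_scale (-\<tau>) K))"
    by (simp add: fun_eq_iff vec_eq_iff algebra_simps)
  ultimately have "(ncurve A B B0 has_derivative (\<lambda>h. cmat_scale h (D + cmat_scale (-\<tau>) K))) (at \<tau>)"
    by simp
  then show ?thesis by blast
qed


lemma entry_holo:
  fixes \<Phi> :: "complex^'n^'m \<Rightarrow> complex^'b^'a" and N :: "complex \<Rightarrow> complex^'n^'m"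
  assumes hol: "\<forall>x\<in>W. \<exists>L. (\<Phi> has_derivative L) (at x) \<and> (\<forall>v. L (cmat_scale \<i> v) = cmat_scale \<i> (L v))"
    and NW: "\<And>\<tau>. \<tau> \<in> S \<Longrightarrow> N \<tau> \<in> W"
    and Nd: "\<And>\<tau>. \<exists>Q. (N has_derivative (\<lambda>h. cmat_scale h Q)) (at \<tau>)"
  shows "(\<lambda>\<tau>. \<Phi> (N \<tau>) $ a $ b) holomorphic_on S"
  unfolding holomorphic_on_def
proof
  fix \<tau> assume "\<tau> \<in> S"
  then obtain L where L: "(\<Phi> has_derivative L) (at (N \<tau>))" "\<forall>v. L (cmat_scale \<i> v) = cmat_scale \<i> (L v)"
    using hol NW by blast
  obtain Q where Q: "(N has_derivative (\<lambda>h. cmat_scale h Q)) (at \<tau>)" using Nd by blast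
  have bl: "bounded_linear L" using L(1) has_derivative_bounded_linear by blast
  have "((\<Phi> \<circ> N) has_derivative (L \<circ> (\<lambda>h. cmat_scale h Q))) (at \<tau>)"
    using diff_chain_at[OF Q L(1)] .
  then have "((\<lambda>\<tau>. (\<Phi> \<circ> N) \<tau> $ a $ b) has_derivative (\<lambda>h. (L \<circ> (\<lambda>h. cmat_scale h Q)) h $ a $ b)) (at \<tau>)"
    using bounded_linear.has_derivative[OF bounded_linear_compose[OF bounded_linear_vec_nth bounded_linear_vec_nth]]
    by blast
  moreover have "(\<lambda>h. (L \<circ> (\<lambda>h. cmat_scale h Q)) h $ a $ b) = (*) (L Q $ a $ b)"
    using clinear_ext[OF bl] L(2) by (simp add: fun_eq_iff mult.commute)
  ultimately have "((\<lambda>\<tau>. \<Phi> (N \<tau>) $ a $ b) has_field_derivative (L Q $ a $ b)) (at \<tau>)"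
    by (simp add: has_field_derivative_def comp_def)
  then show "(\<lambda>\<tau>. \<Phi> (N \<tau>) $ a $ b) field_differentiable at \<tau> within S"
    using field_differentiable_at_within field_differentiable_def by blast
qed



lemma identity_real_i:
  assumes "f holomorphic_on ball 0 2" "\<And>t::real. \<bar>t\<bar> < 2 \<Longrightarrow> f (of_real t) = 0"
  shows "f \<i> = 0"
proof -
  define U where "U = complex_of_real ` {-1<..<1}"
  have U: "U \<subseteq> ball 0 2"
  proof
    fix z assume "z \<in> U"
    then obtain t where "z = of_real t" "-1 < t" "t < 1" by (auto simp: U_def)
    then show "z \<in> ball 0 2" by (simp add: dist_norm)
  qed
  have f0: "\<And>z. z \<in> U \<Longrightarrow> f z = 0"
  proof -
    fix z assume "z \<in> U"
    then obtain t where "z = of_real t" "-1 < t" "t < 1" by (auto simp: U_def)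
    then show "f z = 0" using assms(2)[of t] by simp
  qed
  have lim: "(0::complex) islimpt U"
    unfolding islimpt_approachable
  proof (intro allI impI)
    fix e :: real assume e: "0 < e"
    define x where "x = min (e/2) (1/2)"
    have "x > 0" "x < 1" "x < e" using e by (auto simp: x_def)
    then have "complex_of_real x \<in> U" "complex_of_real x \<noteq> 0" "dist (complex_of_real x) 0 < e"
      by (auto simp: dist_norm U_def)
    then show "\<exists>x'\<in>U. x' \<noteq> 0 \<and> dist x' 0 < e"
      by blast
  qed
  have i: "\<i> \<in> ball (0::complex) 2" by simp
  have z: "(0::complex) \<in> ball 0 2" by simp
  show ?thesis
    using analytic_continuation[OF assms(1) open_ball connected_ball U z lim f0 i] .
qed




lemma B0_exists:
  fixes A0 :: "complex^('r::finite+'s::finite)^'r"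
  assumes "full_rank A0" "pr A0 A0 = 0"
  shows "\<exists>B0. pr A0 B0 = mat 1 \<and> pr B0 B0 = 0"
proof -
  obtain R where R: "A0 ** R = mat 1" using full_rank_right_inv[OF assms(1)] by blast
  define B1 where "B1 = ctrans (Isig ** R)"
  have p1: "pr A0 B1 = mat 1"
    by (simp add: pr_def B1_def matrix_mul_assoc[symmetric] R)
       (simp add: matrix_mul_assoc R)
  define M where "M = pr B1 B1"
  have hM: "ctrans M = M" by (simp add: M_def pr_swap)
  have p2: "pr B1 A0 = mat 1" using pr_swap[of A0 B1] p1 by simp
  define B0 where "B0 = B1 - cmat_scale (1/2) (M ** A0)"
  have "pr A0 B0 = mat 1"
    by (simp add: B0_def p1 assms(2))
  moreover have "pr B0 B0 = 0"
    by (simp add: B0_def p1 p2 assms(2) hM M_def[symmetric] mm_diff_l mm_diff_r)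
  ultimately show ?thesis by blast
qed

definition nrm :: "complex^('r::finite+'s::finite)^'a \<Rightarrow> complex^('r+'s)^'a \<Rightarrow> complex^('r+'s)^'a" where
  "nrm B0 A = cinv (pr A B0) ** A"

lemma uniform_nbhd:
  fixes A0 B0 :: "complex^('r::finite+'s::finite)^'a"
  assumes "open W0" "A0 \<in> W0" "pr A0 B0 = mat 1"
  shows "\<exists>e>0. \<forall>A B. dist A A0 < e \<longrightarrow> dist B A0 < e \<longrightarrow>
     det (pr A B0) \<noteq> 0 \<and> det (pr B B0) \<noteq> 0 \<and> (\<forall>\<tau>\<in>cball 0 2. ncurve (nrm B0 A) (nrm B0 B) B0 \<tau> \<in> W0)"
proof -
  define G where "G = (\<lambda>z::((complex^('r+'s)^'a) \<times> (complex^('r+'s)^'a)) \<times> complex.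
      ncurve (nrm B0 (fst (fst z))) (nrm B0 (snd (fst z))) B0 (snd z))"
  define Od where "Od = {z::((complex^('r+'s)^'a) \<times> (complex^('r+'s)^'a)) \<times> complex.
      det (pr (fst (fst z)) B0) \<noteq> 0} \<inter> {z. det (pr (snd (fst z)) B0) \<noteq> 0}"
  have oO: "open Od" unfolding Od_def pr_def
    by (intro open_Int open_Collect_neq continuous_intros)
  have cG: "continuous_on Od G"
    unfolding G_def ncurve_def Let_def nrm_def pr_def
    by (intro continuous_intros) (auto simp: Od_def pr_def)
  define Od2 where "Od2 = G -` W0 \<inter> Od"
  have oO': "open Od2" using cG oO assms(1) continuous_on_open_vimage unfolding Od2_def by blast
  define K where "K = {(A0, A0)} \<times> cball (0::complex) 2"
  have cK: "compact K" unfolding K_def by (intro compact_Times compact_sing compact_cball)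
  have KO: "K \<subseteq> Od2"
  proof
    fix z assume "z \<in> K"
    then obtain \<tau> where z: "z = ((A0, A0), \<tau>)" by (auto simp: K_def)
    have "nrm B0 A0 = A0" by (simp add: nrm_def assms(3) cinv_mat1)
    then have "G z = A0" by (simp add: G_def z ncurve_same)
    then show "z \<in> Od2" using assms by (simp add: Od2_def Od_def z)
  qed
  obtain e where e: "e > 0" "\<And>x. x \<in> K \<Longrightarrow> \<exists>G\<in>{Od2}. ball x e \<subseteq> G"
    using Heine_Borel_lemma[OF cK, of "{Od2}"] KO oO' by auto
  show ?thesis
  proof (intro exI[of _ "e/2"] conjI allI impI)
    show "e/2 > 0" using e by simp
    fix A B :: "complex^('r+'s)^'a"
    assume d: "dist A A0 < e/2" "dist B A0 < e/2"
    have in1: "((A, B), \<tau>) \<in> Od2" if "\<tau> \<in> cball 0 2" for \<tau>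
    proof -
      have "((A0, A0), \<tau>) \<in> K" using that by (simp add: K_def)
      then have "ball ((A0, A0), \<tau>) e \<subseteq> Od2" using e by auto
      moreover have "dist ((A0, A0), \<tau>) ((A, B), \<tau>) < e"
      proof -
        have "dist ((A0, A0), \<tau>) ((A, B), \<tau>) = sqrt ((dist A0 A)\<^sup>2 + (dist A0 B)\<^sup>2)"
          by (simp add: dist_Pair_Pair)
        also have "\<dots> \<le> dist A0 A + dist A0 B" by (rule sqrt_sum_squares_le_sum) auto
        also have "\<dots> < e" using d by (simp add: dist_commute)
        finally show ?thesis .
      qed
      ultimately show ?thesis by auto
    qed
    have "((A, B), 0) \<in> Od2" using in1[of 0] by simp
    then show "det (pr A B0) \<noteq> 0" "det (pr B B0) \<noteq> 0" by (auto simp: Od2_def Od_def)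
    show "\<forall>\<tau>\<in>cball 0 2. ncurve (nrm B0 A) (nrm B0 B) B0 \<tau> \<in> W0"
      using in1 by (auto simp: Od2_def G_def)
  qed
qed



lemma pr_entry: "pr X Y $ a $ b = (\<Sum>l\<in>UNIV. (\<Sum>k\<in>UNIV. X $ a $ k * Isig $ k $ l) * cnj (Y $ b $ l))"
  by (simp add: pr_def matrix_matrix_mult_def)

lemma full_rank_of_pr:
  assumes "pr N B0 = mat 1"
  shows "full_rank N"
  using assms unfolding pr_def by (intro full_rank_of_right_inv[of _ "Isig ** ctrans B0"]) (simp add: matrix_mul_assoc)

theorem proposition2p5:
  fixes F :: "(complex^('r::finite + 's::finite)) set \<Rightarrow> (complex^('r2::finite + 's2::finite)) set"
    and U :: "(complex^('r+'s)) set set"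
  assumes "CARD('r) \<le> CARD('s)" and "CARD('r2) \<le> CARD('s2)"
    and "grass_holomorphic F U"
    and "\<exists>p\<in>U. gnull p"
    and "\<forall>p\<in>U. gnull p \<longrightarrow> gnull (F p)"
  shows "\<exists>U'. U' \<subseteq> U \<and> openin grass_top U' \<and> orthogonal_map F U'"
proof -
  note hol = assms(3)
  obtain p0 where p0: "p0 \<in> U" "gnull p0" using assms(4) by blast
  obtain A0 B' :: "complex^('r+'s)^'r" where A0: "full_rank A0" "rowsp A0 = p0"
    using p0(2) unfolding gnull_def gperp_def by blast
  have A0n: "pr A0 A0 = 0" using gnull_reps p0(2) A0(2) by blast
  have A0U: "A0 \<in> reps U" using A0 p0 by (simp add: reps_def)
  obtain W0 and \<Phi> :: "complex^('r+'s)^'r \<Rightarrow> complex^('r2+'s2)^'r2" where W0: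
      "A0 \<in> W0" "W0 \<subseteq> reps U" "mat_holomorphic_on \<Phi> W0"
      "\<forall>B\<in>W0. full_rank (\<Phi> B) \<and> rowsp (\<Phi> B) = F (rowsp B)"
    using hol A0U unfolding grass_holomorphic_def by meson
  have oW0: "open W0" using W0(3) unfolding mat_holomorphic_on_def by blast
  have derW0: "\<forall>x\<in>W0. \<exists>L. (\<Phi> has_derivative L) (at x) \<and> (\<forall>v. L (cmat_scale \<i> v) = cmat_scale \<i> (L v))"
    using W0(3) unfolding mat_holomorphic_on_def by blast
  obtain B0 :: "complex^('r+'s)^'r" where B0: "pr A0 B0 = mat 1" "pr B0 B0 = 0"
    using B0_exists[OF A0(1) A0n] by blast
  obtain e where e: "e > 0" "\<And>A B. dist A A0 < e \<Longrightarrow> dist B A0 < e \<Longrightarrow>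
     det (pr A B0) \<noteq> 0 \<and> det (pr B B0) \<noteq> 0 \<and> (\<forall>\<tau>\<in>cball 0 2. ncurve (nrm B0 A) (nrm B0 B) B0 \<tau> \<in> W0)"
    using uniform_nbhd[OF oW0 W0(1) B0(1)] by blast
  obtain e1 where e1: "e1 > 0" "ball A0 e1 \<subseteq> W0" using oW0 W0(1) open_contains_ball by blast
  define d where "d = min e e1"
  define Bl where "Bl = ball A0 d"
  have BlW: "Bl \<subseteq> W0" using e1 by (auto simp: Bl_def d_def)
  have Ble: "\<And>A. A \<in> Bl \<Longrightarrow> dist A A0 < e" by (auto simp: Bl_def d_def dist_commute)
  have fr: "\<And>A. A \<in> Bl \<Longrightarrow> full_rank A" using BlW W0(2) by (auto simp: reps_def)
  have A0Bl: "A0 \<in> Bl" using e e1 by (simp add: Bl_def d_def)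
  define U' where "U' = rowsp ` Bl"
  have U'U: "U' \<subseteq> U" using BlW W0(2) by (auto simp: U'_def reps_def)
  have oU': "openin grass_top U'" unfolding U'_def by (rule rowsp_image_open) (auto simp: Bl_def fr)
  have cU': "connectedin grass_top U'" unfolding U'_def by (rule rowsp_image_connected) (auto simp: Bl_def fr)
  have nU': "\<exists>p\<in>U'. gnull p" using A0Bl A0(2) p0(2) by (auto simp: U'_def)
  have perp: "gperp (F p) (F q)" if pq: "p \<in> U'" "q \<in> U'" "gperp p q" for p q
  proof -
    obtain A B where AB: "A \<in> Bl" "B \<in> Bl" "p = rowsp A" "q = rowsp B" using pq by (auto simp: U'_def)
    have pAB: "pr A B = 0" using gperp_reps pq(3) AB by blast
    have ee: "det (pr A B0) \<noteq> 0" "det (pr B B0) \<noteq> 0"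
       "\<forall>\<tau>\<in>cball 0 2. ncurve (nrm B0 A) (nrm B0 B) B0 \<tau> \<in> W0"
      using e(2)[OF Ble[OF AB(1)] Ble[OF AB(2)]] by auto
    define Ah where "Ah = nrm B0 A"
    define Bh where "Bh = nrm B0 B"
    have hA: "pr Ah B0 = mat 1" using cinv_left[OF ee(1)] by (simp add: Ah_def nrm_def)
    have hB: "pr Bh B0 = mat 1" using cinv_left[OF ee(2)] by (simp add: Bh_def nrm_def)
    have hAB: "pr Ah Bh = 0" by (simp add: Ah_def Bh_def nrm_def pAB)
    have rA: "rowsp Ah = rowsp A"
    proof
      show "rowsp Ah \<subseteq> rowsp A" unfolding Ah_def nrm_def by (rule rowsp_mult_sub)
      have "A = pr A B0 ** Ah" using cinv_right[OF ee(1)] by (simp add: Ah_def nrm_def matrix_mul_assoc)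
      then show "rowsp A \<subseteq> rowsp Ah" using rowsp_mult_sub by metis
    qed
    have rB: "rowsp Bh = rowsp B"
    proof
      show "rowsp Bh \<subseteq> rowsp B" unfolding Bh_def nrm_def by (rule rowsp_mult_sub)
      have "B = pr B B0 ** Bh" using cinv_right[OF ee(2)] by (simp add: Bh_def nrm_def matrix_mul_assoc)
      then show "rowsp B \<subseteq> rowsp Bh" using rowsp_mult_sub by metis
    qed
    define N where "N = ncurve Ah Bh B0"
    have NW: "\<And>\<tau>. cmod \<tau> \<le> 2 \<Longrightarrow> N \<tau> \<in> W0" using ee(3) by (simp add: N_def Ah_def Bh_def)
    have Nd: "\<And>\<tau>. \<exists>Q. (N has_derivative (\<lambda>h. cmat_scale h Q)) (at \<tau>)"
      unfolding N_def by (rule ncurve_deriv)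
    define l where "l = (\<lambda>a b \<tau>. pr (\<Phi> (N \<tau>)) (\<Phi> (N (cnj \<tau>))) $ a $ b)"
    have holl: "l a b holomorphic_on ball 0 2" for a b
    proof -
      have h1: "(\<lambda>\<tau>. \<Phi> (N \<tau>) $ a $ k) holomorphic_on ball 0 2" for k
        by (rule entry_holo[OF derW0 _ Nd]) (auto intro!: NW)
      have h2: "(\<lambda>\<tau>. \<Phi> (N \<tau>) $ b $ k) holomorphic_on cnj ` ball 0 2" for k
        by (rule entry_holo[OF derW0 _ Nd]) (auto intro!: NW)
      have h3: "(\<lambda>\<tau>. cnj (\<Phi> (N (cnj \<tau>)) $ b $ k)) holomorphic_on ball 0 2" for k
        using holomorphic_on_compose_cnj_cnj[OF h2[of k] open_ball] by (simp add: comp_def)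
      show ?thesis unfolding l_def pr_entry
        by (intro holomorphic_on_sum holomorphic_on_mult holomorphic_on_const h1 h3)
    qed
    have l0: "l a b (of_real t) = 0" if "\<bar>t\<bar> < 2" for a b t
    proof -
      have Nt: "N (of_real t) \<in> W0" using NW that by simp
      have pN: "pr (N (of_real t)) B0 = mat 1" unfolding N_def by (rule ncurve_B0[OF hA hB B0(2)])
      have nN: "pr (N (of_real t)) (N (of_real t)) = 0" unfolding N_def by (rule ncurve_null[OF hA hB B0(2) hAB])
      have "gnull (rowsp (N (of_real t)))" by (rule gnull_intro[OF full_rank_of_pr[OF pN] nN])
      moreover have "rowsp (N (of_real t)) \<in> U" using Nt W0(2) by (auto simp: reps_def)
      ultimately have "gnull (F (rowsp (N (of_real t))))" using assms(5) by blast
      then have "gnull (rowsp (\<Phi> (N (of_real t))))" using W0(4) Nt by simp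
      then have "pr (\<Phi> (N (of_real t))) (\<Phi> (N (of_real t))) = 0" by (rule gnull_reps)
      then show ?thesis by (simp add: l_def)
    qed
    have "l a b \<i> = 0" for a b
      by (rule identity_real_i[OF holl l0])
    then have z: "pr (\<Phi> (N \<i>)) (\<Phi> (N (- \<i>))) = 0" by (simp add: l_def vec_eq_iff)
    have Ni: "N \<i> = Ah" "N (- \<i>) = Bh" by (simp_all add: N_def ncurve_i ncurve_mi)
    have AW: "Ah \<in> W0" "Bh \<in> W0" using NW[of \<i>] NW[of "-\<i>"] Ni by auto
    have "gperp (rowsp (\<Phi> Ah)) (rowsp (\<Phi> Bh))"
      using gperp_intro[of "\<Phi> Ah" "\<Phi> Bh"] W0(4) AW z Ni by auto
    then show ?thesis using W0(4) AW rA rB AB by simp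
  qed
  have "orthogonal_map F U'"
    unfolding orthogonal_map_def
    using grass_holomorphic_mono[OF hol U'U oU'] cU' nU' perp by blast
  then show ?thesis using U'U oU' by blast
qed


end
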